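(* Let $B_k$ ($k\ge2$) be a generalized Bethe tree with parameters $n_1,\dots,n_k$, $d_1,\dots,d_k$, $m_1,\dots,m_{k-1}$ as in the context, let $\alpha\in[0,1]$ and $\beta=1-\alpha$. Define polynomials $P_0(\lambda)=1$, $P_1(\lambda)=\lambda-\alpha$, and \[ P_j(\lambda)=(\lambda-\alpha d_j)P_{j-1}(\lambda)-\beta^2m_{j-1}P_{j-2}(\lambda)\quad (j=2,\dots,k). \] Then the characteristic polynomial $\phi(\lambda)=\det(\lambda I-A_\alpha(B_k))$ satisfies \[ \phi(\lambda)=P_k(\lambda)\prod_{j=1}^{k-1}P_j(\lambda)^{n_j-n_{j+1}}. \]
   Context: For a graph $G$, $A(G)$ is the adjacency matrix, $D(G)$ the diagonal degree matrix, and $A_\alpha(G)=\alpha D(G)+(1-\alpha)A(G)$. In a rooted tree, the level of a vertex is its distance to the root plus one. A generalized Bethe tree $B_k$ is a rooted tree with $k$ levels in which all vertices at the same level have the same degree. For $j\in\{1,\dots,k\}$, $n_{k-j+1}$ denotes the number of vertices at level $j$ and $d_{k-j+1}$ their common degree (so index $1$ refers to the deepest level and index $k$ to the root; $d_1=1$, $n_k=1$). For $j\in\{1,\dots,k-1\}$, $m_j=n_j/n_{j+1}$ (a positive integer); one has $n_j=(d_{j+1}-1)n_{j+1}$ for $j\le k-2$ and $n_{k-1}=d_k=m_{k-1}$. *)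

theory Defs
  imports Main "Jordan_Normal_Form.Char_Poly"
begin

definition simple_graph :: "nat \<Rightarrow> (nat \<Rightarrow> nat \<Rightarrow> bool) \<Rightarrow> bool" where
  "simple_graph N E \<longleftrightarrow> (\<forall>u v. E u v \<longrightarrow> u < N \<and> v < N) \<and>
     (\<forall>u v. E u v \<longrightarrow> E v u) \<and> (\<forall>u. \<not> E u u)"

definition is_walk :: "nat \<Rightarrow> (nat \<Rightarrow> nat \<Rightarrow> bool) \<Rightarrow> nat list \<Rightarrow> bool" where
  "is_walk N E p \<longleftrightarrow> p \<noteq> [] \<and> (\<forall>v\<in>set p. v < N) \<and>
     (\<forall>i. Suc i < length p \<longrightarrow> E (p ! i) (p ! Suc i))"

definition connected_graph :: "nat \<Rightarrow> (nat \<Rightarrow> nat \<Rightarrow> bool) \<Rightarrow> bool" where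
  "connected_graph N E \<longleftrightarrow>
     (\<forall>u<N. \<forall>v<N. \<exists>p. is_walk N E p \<and> hd p = u \<and> last p = v)"

definition is_cycle :: "nat \<Rightarrow> (nat \<Rightarrow> nat \<Rightarrow> bool) \<Rightarrow> nat list \<Rightarrow> bool" where
  "is_cycle N E p \<longleftrightarrow> is_walk N E p \<and> length p \<ge> 3 \<and> distinct p \<and> E (last p) (hd p)"

definition is_tree :: "nat \<Rightarrow> (nat \<Rightarrow> nat \<Rightarrow> bool) \<Rightarrow> bool" where
  "is_tree N E \<longleftrightarrow> N \<ge> 1 \<and> simple_graph N E \<and> connected_graph N E \<and>
     (\<nexists>p. is_cycle N E p)"

definition gdist :: "nat \<Rightarrow> (nat \<Rightarrow> nat \<Rightarrow> bool) \<Rightarrow> nat \<Rightarrow> nat \<Rightarrow> nat" where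
  "gdist N E u v = (LEAST n. \<exists>p. is_walk N E p \<and> hd p = u \<and> last p = v \<and> length p = Suc n)"

definition level :: "nat \<Rightarrow> (nat \<Rightarrow> nat \<Rightarrow> bool) \<Rightarrow> nat \<Rightarrow> nat \<Rightarrow> nat" where
  "level N E r v = gdist N E r v + 1"

definition gdegree :: "nat \<Rightarrow> (nat \<Rightarrow> nat \<Rightarrow> bool) \<Rightarrow> nat \<Rightarrow> nat" where
  "gdegree N E v = card {u. u < N \<and> E v u}"

definition gen_bethe_tree :: "nat \<Rightarrow> (nat \<Rightarrow> nat \<Rightarrow> bool) \<Rightarrow> nat \<Rightarrow> nat \<Rightarrow> bool" where
  "gen_bethe_tree N E r k \<longleftrightarrow> is_tree N E \<and> r < N \<and>
     (\<forall>v<N. level N E r v \<le> k) \<and> (\<exists>v<N. level N E r v = k) \<and>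
     (\<forall>u<N. \<forall>v<N. level N E r u = level N E r v \<longrightarrow> gdegree N E u = gdegree N E v)"

definition adj_matrix :: "nat \<Rightarrow> (nat \<Rightarrow> nat \<Rightarrow> bool) \<Rightarrow> real mat" where
  "adj_matrix N E = mat N N (\<lambda>(i, j). if E i j then 1 else 0)"

definition deg_matrix :: "nat \<Rightarrow> (nat \<Rightarrow> nat \<Rightarrow> bool) \<Rightarrow> real mat" where
  "deg_matrix N E = mat N N (\<lambda>(i, j). if i = j then real (gdegree N E i) else 0)"

definition A_alpha :: "real \<Rightarrow> nat \<Rightarrow> (nat \<Rightarrow> nat \<Rightarrow> bool) \<Rightarrow> real mat" where
  "A_alpha \<alpha> N E = \<alpha> \<cdot>\<^sub>m deg_matrix N E + (1 - \<alpha>) \<cdot>\<^sub>m adj_matrix N E"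

text \<open>The polynomials P_j; d and m are the level parameters (index 1 = deepest level).\<close>
fun Pb :: "real \<Rightarrow> (nat \<Rightarrow> real) \<Rightarrow> (nat \<Rightarrow> real) \<Rightarrow> nat \<Rightarrow> real poly" where
  "Pb \<alpha> d m 0 = 1"
| "Pb \<alpha> d m (Suc 0) = [:- \<alpha>, 1:]"
| "Pb \<alpha> d m (Suc (Suc j)) =
     [:- (\<alpha> * d (Suc (Suc j))), 1:] * Pb \<alpha> d m (Suc j)
     - Polynomial.smult ((1 - \<alpha>)^2 * m (Suc j)) (Pb \<alpha> d m j)"

end

theory Submission
  imports Defs
begin


locale rtree =
  fixes N :: nat and E :: "nat \<Rightarrow> nat \<Rightarrow> bool" and r :: nat
  assumes tree: "is_tree N E" and rN: "r < N"
begin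

lemma sg: "simple_graph N E" using tree by (simp add: is_tree_def)
lemma E_lt: "E u v \<Longrightarrow> u < N \<and> v < N" using sg by (simp add: simple_graph_def)
lemma E_sym: "E u v \<Longrightarrow> E v u" using sg by (simp add: simple_graph_def)
lemma E_irr: "\<not> E u u" using sg by (simp add: simple_graph_def)
lemma no_cycle: "\<not> is_cycle N E p" using tree by (simp add: is_tree_def)

definition dist :: "nat \<Rightarrow> nat" where "dist v = gdist N E r v"

lemma walk_single: "v < N \<Longrightarrow> is_walk N E [v]" by (simp add: is_walk_def)

lemma walk_snoc: assumes "is_walk N E p" "E (last p) v" shows "is_walk N E (p @ [v])"
proof -
  have p: "p \<noteq> []" "\<forall>v\<in>set p. v < N" "\<forall>i. Suc i < length p \<longrightarrow> E (p ! i) (p ! Suc i)"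
    using assms(1) by (auto simp: is_walk_def)
  have "v < N" using E_lt assms(2) by blast
  moreover have "E ((p @ [v]) ! i) ((p @ [v]) ! Suc i)" if "Suc i < length (p @ [v])" for i
  proof (cases "Suc i < length p")
    case True then show ?thesis using p(3) by (simp add: nth_append)
  next
    case False
    then have "Suc i = length p" using that by simp
    then have "i = length p - 1" by simp
    then show ?thesis using assms(2) p(1) by (simp add: nth_append last_conv_nth)
  qed
  ultimately show ?thesis using p by (auto simp: is_walk_def)
qed

lemma walk_butlast: assumes "is_walk N E p" "length p \<ge> 2"
  shows "is_walk N E (butlast p)" "E (last (butlast p)) (last p)"
proof -
  have p: "p \<noteq> []" "\<forall>v\<in>set p. v < N" "\<forall>i. Suc i < length p \<longrightarrow> E (p ! i) (p ! Suc i)"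
    using assms(1) by (auto simp: is_walk_def)
  have "butlast p \<noteq> []" using assms(2) by (cases p) auto
  then show "is_walk N E (butlast p)" using p assms(2)
    unfolding is_walk_def by (auto simp: nth_butlast dest: in_set_butlastD)
  have bl: "butlast p \<noteq> []" using assms(2) by (cases p) auto
  have "last (butlast p) = butlast p ! (length (butlast p) - 1)" by (rule last_conv_nth[OF bl])
  also have "\<dots> = p ! (length p - 2)" using assms(2) by (simp add: nth_butlast numeral_2_eq_2)
  finally have "last (butlast p) = p ! (length p - 2)" .
  moreover have "last p = p ! Suc (length p - 2)" using assms(2) p(1)
    by (simp add: last_conv_nth Suc_diff_Suc numeral_2_eq_2)
  ultimately show "E (last (butlast p)) (last p)" using p(3) assms(2)
    by (metis Suc_diff_Suc diff_less lessI less_le_trans numeral_2_eq_2 zero_less_Suc)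
qed

lemma dist_walk: assumes "v < N"
  shows "\<exists>p. is_walk N E p \<and> hd p = r \<and> last p = v \<and> length p = Suc (dist v)"
proof -
  have "connected_graph N E" using tree by (simp add: is_tree_def)
  then obtain p where p: "is_walk N E p" "hd p = r" "last p = v"
    using assms rN unfolding connected_graph_def by blast
  then have "length p = Suc (length p - 1)" by (cases p) (auto simp: is_walk_def)
  then have "\<exists>n p. is_walk N E p \<and> hd p = r \<and> last p = v \<and> length p = Suc n" using p by blast
  then show ?thesis unfolding dist_def gdist_def by (rule LeastI_ex)
qed

lemma dist_le: "is_walk N E p \<Longrightarrow> hd p = r \<Longrightarrow> last p = v \<Longrightarrow> length p = Suc n \<Longrightarrow> dist v \<le> n"
  unfolding dist_def gdist_def by (rule Least_le) blast

lemma dist_r: "dist r = 0"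
  using dist_le[of "[r]" r 0] walk_single[OF rN] by simp

lemma dist_edge: assumes "E u v" shows "dist v \<le> dist u + 1"
proof -
  obtain p where p: "is_walk N E p" "hd p = r" "last p = u" "length p = Suc (dist u)"
    using dist_walk E_lt assms by blast
  have "is_walk N E (p @ [v])" using walk_snoc p assms by simp
  moreover have "hd (p @ [v]) = r" using p by (cases p) (auto simp: is_walk_def)
  ultimately show ?thesis using dist_le[of "p @ [v]" v "dist u + 1"] p by simp
qed

lemma dist_par: assumes "v < N" "v \<noteq> r" shows "\<exists>w. E w v \<and> dist w + 1 = dist v"
proof -
  obtain p where p: "is_walk N E p" "hd p = r" "last p = v" "length p = Suc (dist v)"
    using dist_walk assms by blast
  have l2: "length p \<ge> 2"
  proof (rule ccontr)
    assume "\<not> ?thesis"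
    then have "length p = 1" using p(4) by simp
    then obtain a where "p = [a]" by (metis One_nat_def length_0_conv length_Suc_conv)
    then show False using p assms by simp
  qed
  define w where "w = last (butlast p)"
  have "is_walk N E (butlast p)" "E w v" using walk_butlast[OF p(1) l2] p(3) w_def by auto
  moreover have "hd (butlast p) = r" using p(2) l2
    by (cases p; cases "tl p") auto
  ultimately have "dist w \<le> dist v - 1" using dist_le[of "butlast p" w "dist v - 1"] p(4) w_def l2
    by simp
  moreover have "dist v \<le> dist w + 1" using dist_edge \<open>E w v\<close> by simp
  ultimately show ?thesis using \<open>E w v\<close> l2 p(4) by (intro exI[of _ w]) auto
qed

lemma dist0: "v < N \<Longrightarrow> dist v = 0 \<Longrightarrow> v = r"
  using dist_par by fastforce

definition pred :: "nat \<Rightarrow> nat" where "pred v = (SOME w. E w v \<and> dist w + 1 = dist v)"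

lemma pred: assumes "v < N" "v \<noteq> r"
  shows "E (pred v) v" "dist (pred v) + 1 = dist v" "pred v < N"
proof -
  have "E (pred v) v \<and> dist (pred v) + 1 = dist v"
    unfolding pred_def using dist_par[OF assms] by (rule someI_ex)
  then show "E (pred v) v" "dist (pred v) + 1 = dist v" "pred v < N" using E_lt by auto
qed

definition anc :: "nat \<Rightarrow> nat \<Rightarrow> nat" where "anc s v = (pred ^^ s) v"

lemma anc0[simp]: "anc 0 v = v" by (simp add: anc_def)
lemma ancS: "anc (Suc s) v = pred (anc s v)" by (simp add: anc_def)

lemma anc: assumes "v < N" "s \<le> dist v" shows "anc s v < N \<and> dist (anc s v) = dist v - s"
  using assms(2)
proof (induction s)
  case 0 then show ?case using assms by simp
next
  case (Suc s)
  then have IH: "anc s v < N" "dist (anc s v) = dist v - s" by auto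
  then have "anc s v \<noteq> r" using Suc.prems dist_r by auto
  then show ?case using pred[OF IH(1)] IH Suc.prems by (simp add: ancS)
qed

lemma anc_edge: assumes "v < N" "s < dist v" shows "E (anc (Suc s) v) (anc s v)"
proof -
  have "anc s v < N" "dist (anc s v) = dist v - s" using anc assms by auto
  then have "anc s v \<noteq> r" using assms dist_r by auto
  then show ?thesis using pred \<open>anc s v < N\<close> by (simp add: ancS)
qed

lemma anc_top: assumes "v < N" shows "anc (dist v) v = r"
  using anc[OF assms, of "dist v"] dist0 by simp

lemma cycle_build:
  fixes m :: nat
  assumes y1: "y1 < N" and y2: "y2 < N" and D1: "dist y1 = D" and D2: "dist y2 = D"
    and ne: "y1 \<noteq> y2" and m: "m \<le> 1"
    and m0: "m = 0 \<Longrightarrow> E y1 y2"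
    and m1: "m = 1 \<Longrightarrow> E y1 c \<and> E c y2 \<and> dist c = D + 1"
  shows False
proof -
  define t where "t = (LEAST t. anc t y1 = anc t y2)"
  have ex: "anc D y1 = anc D y2" using anc_top[OF y1] anc_top[OF y2] D1 D2 by simp
  have tD: "t \<le> D" unfolding t_def by (rule Least_le) (rule ex)
  have teq: "anc t y1 = anc t y2" unfolding t_def by (rule LeastI) (rule ex)
  have tne: "s < t \<Longrightarrow> anc s y1 \<noteq> anc s y2" for s unfolding t_def using not_less_Least by blast
  have t0: "t > 0" using teq ne by (cases t) auto
  define L where "L = 2 * t + 1 + m"
  define f where "f i = (if i \<le> t then anc (t - i) y1 else if i \<le> t + m then c
                         else anc (i - t - 1 - m) y2)" for i
  define p where "p = map f [0..<L]"
  have a1: "s \<le> D \<Longrightarrow> anc s y1 < N \<and> dist (anc s y1) = D - s" for s using anc[OF y1] D1 by auto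
  have a2: "s \<le> D \<Longrightarrow> anc s y2 < N \<and> dist (anc s y2) = D - s" for s using anc[OF y2] D2 by auto
  have cN: "m = 1 \<Longrightarrow> c < N" using m1 E_lt by blast
  have fN: "i < L \<Longrightarrow> f i < N" for i
    using a1 a2 cN tD m unfolding f_def L_def by auto
  have fd: "i < L \<Longrightarrow> dist (f i) = (if i \<le> t then D - (t - i) else if i \<le> t + m then D + 1
                         else D - (i - t - 1 - m))" for i
    using a1 a2 m1 tD m unfolding f_def L_def by auto
  have fE: "E (f i) (f (Suc i))" if "Suc i < L" for i
  proof -
    consider "i < t" | "i = t" "m = 0" | "i = t" "m = 1" | "i = t + 1" "m = 1" | "i > t + m"
      using m by linarith
    then show ?thesis
    proof cases
      case 1
      then have "E (anc (Suc (t - Suc i)) y1) (anc (t - Suc i) y1)"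
        using anc_edge[OF y1] D1 tD by simp
      then show ?thesis using 1 unfolding f_def by (simp add: Suc_diff_Suc)
    next
      case 2 then show ?thesis using m0 unfolding f_def by simp
    next
      case 3 then show ?thesis using m1 unfolding f_def by simp
    next
      case 4 then show ?thesis using m1 unfolding f_def by simp
    next
      case 5
      have "i - t - 1 - m < dist y2" using that 5 D2 tD unfolding L_def by linarith
      then have "E (anc (Suc (i - t - 1 - m)) y2) (anc (i - t - 1 - m) y2)"
        using anc_edge[OF y2] by simp
      moreover have "Suc i - t - 1 - m = Suc (i - t - 1 - m)" using 5 by linarith
      ultimately show ?thesis using 5 unfolding f_def by (simp add: E_sym)
    qed
  qed
  have inj: "inj_on f {0..<L}"
  proof (rule inj_onI)
    fix i j assume ij: "i \<in> {0..<L}" "j \<in> {0..<L}" "f i = f j"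
    have dd: "dist (f i) = dist (f j)" using ij by simp
    show "i = j"
    proof (rule ccontr)
      assume nij: "i \<noteq> j"
      have X: "\<And>i j. i < L \<Longrightarrow> j < L \<Longrightarrow> f i = f j \<Longrightarrow> i \<le> t \<Longrightarrow> j > t + m \<Longrightarrow> False"
      proof -
        fix i j assume h: "i < L" "j < L" "f i = f j" "i \<le> t" "j > t + m"
        have "D - (t - i) = D - (j - t - 1 - m)" using fd[OF h(1)] fd[OF h(2)] h by simp
        then have "t - i = j - t - 1 - m" using h tD unfolding L_def by linarith
        moreover have "anc (t - i) y1 = anc (j - t - 1 - m) y2" using h unfolding f_def by simp
        moreover have "j - t - 1 - m < t" using h unfolding L_def by linarith
        ultimately show False using tne by simp
      qed
      have iL: "i < L" and jL: "j < L" using ij by auto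
      have di: "dist (f i) = (if i \<le> t then D - (t - i) else if i \<le> t + m then D + 1
                         else D - (i - t - 1 - m))" using fd[OF iL] .
      have dj: "dist (f j) = (if j \<le> t then D - (t - j) else if j \<le> t + m then D + 1
                         else D - (j - t - 1 - m))" using fd[OF jL] .
      consider "i \<le> t" | "t < i" "i \<le> t + m" | "t + m < i" by linarith
      then show False
      proof cases
        case 1
        consider "j \<le> t" | "t < j" "j \<le> t + m" | "t + m < j" by linarith
        then show False
        proof cases
          case 1 then show False using \<open>i \<le> t\<close> di dj dd tD nij by (simp split: if_splits; linarith)
        next
          case 2 then show False using \<open>i \<le> t\<close> di dj dd tD by (simp split: if_splits; linarith)
        next
          case 3 then show False using X[OF iL jL ij(3)] \<open>i \<le> t\<close> by simp
        qed
      next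
        case 2
        note I = this
        consider "j \<le> t" | "t < j" "j \<le> t + m" | "t + m < j" by linarith
        then show False
        proof cases
          case 1 then show False using I di dj dd tD by (simp split: if_splits; linarith)
        next
          case 3 then show False using I di dj dd tD by (simp split: if_splits; linarith)
        next
          case 2 then show False using I m nij by linarith
        qed
      next
        case 3
        note I = this
        consider "j \<le> t" | "t < j" "j \<le> t + m" | "t + m < j" by linarith
        then show False
        proof cases
          case 1 then show False using X[OF jL iL ij(3)[symmetric]] I by simp
        next
          case 2 then show False using I di dj dd tD by (simp split: if_splits; linarith)
        next
          case 3
          have "i - t - 1 - m < t" using iL t0 unfolding L_def by linarith
          have "j - t - 1 - m < t" using jL t0 unfolding L_def by linarith
          then show False using I 3 di dj dd tD nij by (simp split: if_splits; linarith)
        qed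
      qed
    qed
  qed
  have "is_cycle N E p"
    unfolding is_cycle_def is_walk_def
  proof (intro conjI)
    show "p \<noteq> []" unfolding p_def L_def by simp
    show "\<forall>v\<in>set p. v < N" unfolding p_def using fN by auto
    show "\<forall>i. Suc i < length p \<longrightarrow> E (p ! i) (p ! Suc i)" unfolding p_def using fE by simp
    show "3 \<le> length p" unfolding p_def L_def using t0 by simp
    show "distinct p" unfolding p_def using inj by (simp add: distinct_map)
    have "last p = f (L - 1)" unfolding p_def L_def by (simp add: last_map)
    moreover have "hd p = f 0" unfolding p_def L_def by (simp add: hd_map upt_conv_Cons del: upt_Suc)
    moreover have "f (L - 1) = anc (t - 1) y2" "f 0 = anc t y2"
      unfolding f_def L_def using teq t0 by auto
    moreover have "E (anc (Suc (t - 1)) y2) (anc (t - 1) y2)"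
      using anc_edge[OF y2, of "t - 1"] D2 tD t0 by simp
    moreover have "Suc (t - 1) = t" using t0 by simp
    ultimately show "E (last p) (hd p)" by (metis E_sym)
  qed
  then show False using no_cycle by simp
qed

lemma no_same: assumes "E x y" shows "dist x \<noteq> dist y"
  using cycle_build[of x y "dist x" 0] assms E_lt E_irr by fastforce

lemma uniq_par: assumes "E y1 x" "E y2 x" "dist y1 + 1 = dist x" "dist y2 + 1 = dist x"
  shows "y1 = y2"
  using cycle_build[of y1 y2 "dist y1" 1 x] assms E_lt E_sym by fastforce

lemma edge_iff: assumes "u < N" "v < N"
  shows "E u v \<longleftrightarrow> (v \<noteq> r \<and> u = pred v) \<or> (u \<noteq> r \<and> v = pred u)"
proof
  assume e: "E u v"
  have "dist v = dist u + 1 \<or> dist u = dist v + 1"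
    using dist_edge[OF e] dist_edge[OF E_sym[OF e]] no_same[OF e] by linarith
  then show "(v \<noteq> r \<and> u = pred v) \<or> (u \<noteq> r \<and> v = pred u)"
  proof
    assume h: "dist v = dist u + 1"
    then have "v \<noteq> r" using dist_r by auto
    then show ?thesis using uniq_par[OF e pred(1)[OF assms(2)]] pred(2)[OF assms(2)] h by auto
  next
    assume h: "dist u = dist v + 1"
    then have "u \<noteq> r" using dist_r by auto
    then show ?thesis using uniq_par[OF E_sym[OF e] pred(1)[OF assms(1)]] pred(2)[OF assms(1)] h by auto
  qed
next
  assume "(v \<noteq> r \<and> u = pred v) \<or> (u \<noteq> r \<and> v = pred u)"
  then show "E u v" using pred assms E_sym by blast
qed

end


lemma det_height:
  fixes A :: "'a::idom mat" and h :: "nat \<Rightarrow> nat"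
  assumes A: "A \<in> carrier_mat n n"
    and h: "\<And>i j. i < n \<Longrightarrow> j < n \<Longrightarrow> i \<noteq> j \<Longrightarrow> A $$ (i,j) \<noteq> 0 \<Longrightarrow> h i < h j"
  shows "det A = (\<Prod>i=0..<n. A $$ (i,i))"
proof -
  let ?P = "{p. p permutes {0..<n}}"
  let ?t = "\<lambda>p. signof p * (\<Prod>i=0..<n. A $$ (i, p i))"
  have z: "(\<Prod>i=0..<n. A $$ (i, p i)) = 0" if p: "p permutes {0..<n}" "p \<noteq> id" for p
  proof (rule ccontr)
    assume nz: "(\<Prod>i=0..<n. A $$ (i, p i)) \<noteq> 0"
    then have nz': "\<And>i. i < n \<Longrightarrow> A $$ (i, p i) \<noteq> 0" by auto
    have pi: "\<And>i. i < n \<Longrightarrow> p i < n" using permutes_in_image[OF p(1)] by auto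
    have le: "\<forall>i\<in>{0..<n}. h i \<le> h (p i)"
    proof
      fix i assume "i \<in> {0..<n}"
      then show "h i \<le> h (p i)" using h[of i "p i"] nz' pi by (cases "p i = i") auto
    qed
    have sumeq: "(\<Sum>i\<in>{0..<n}. h i) = (\<Sum>i\<in>{0..<n}. h (p i))"
      using sum.permute[OF p(1), of h] by (simp add: comp_def)
    have eq: "\<forall>i\<in>{0..<n}. p i = i"
    proof (rule ccontr)
      assume "\<not> ?thesis"
      then obtain i where i: "i < n" "p i \<noteq> i" by auto
      then have "h i < h (p i)" using h[of i "p i"] nz' pi by auto
      then have "(\<Sum>i\<in>{0..<n}. h i) < (\<Sum>i\<in>{0..<n}. h (p i))"
        using i le by (intro sum_strict_mono_ex1) auto
      then show False using sumeq by simp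
    qed
    have "p = id"
    proof
      fix i show "p i = id i"
        using eq permutes_not_in[OF p(1), of i] by (cases "i < n") auto
    qed
    then show False using p(2) by simp
  qed
  have idP: "id \<in> ?P" by (simp add: permutes_id)
  have "det A = sum ?t ?P" by (rule det_def'[OF A])
  also have "\<dots> = ?t id + sum ?t (?P - {id})"
    by (rule sum.remove[OF _ idP]) (simp add: finite_permutations)
  also have "sum ?t (?P - {id}) = 0" by (rule sum.neutral) (auto simp: z)
  finally show ?thesis by simp
qed

lemma ldl_det:
  fixes M :: "real mat" and s x :: "nat \<Rightarrow> real" and nr :: "nat \<Rightarrow> bool" and pr h :: "nat \<Rightarrow> nat"
  assumes M: "M \<in> carrier_mat N N"
    and hpar: "\<And>v. v < N \<Longrightarrow> nr v \<Longrightarrow> pr v < N \<and> h (pr v) < h v"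
    and diag: "\<And>a. a < N \<Longrightarrow> M $$ (a,a) = s a + (\<Sum>c\<in>{c. c < N \<and> nr c \<and> pr c = a}. x c ^ 2 * s c)"
    and off: "\<And>a b. a < N \<Longrightarrow> b < N \<Longrightarrow> a \<noteq> b \<Longrightarrow> M $$ (a,b) =
       (if nr a \<and> pr a = b then s a * x a else 0) + (if nr b \<and> pr b = a then s b * x b else 0)"
  shows "det M = (\<Prod>a=0..<N. s a)"
proof -
  define L where "L = mat N N (\<lambda>(a,b). if a = b then 1 else if nr b \<and> pr b = a then x b else 0)"
  define D where "D = mat N N (\<lambda>(a,b). if a = b then s a else (0::real))"
  have LC: "L \<in> carrier_mat N N" and DC: "D \<in> carrier_mat N N" unfolding L_def D_def by auto
  have Le: "a < N \<Longrightarrow> b < N \<Longrightarrow> L $$ (a,b) = (if a = b then 1 else if nr b \<and> pr b = a then x b else 0)"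
    for a b unfolding L_def by simp
  define g where "g a b c = L $$ (a,c) * s c * L $$ (b,c)" for a b c
  have LD: "L * D = mat N N (\<lambda>(a,c). L $$ (a,c) * s c)"
  proof (rule eq_matI)
    fix a c assume ac: "a < dim_row (mat N N (\<lambda>(a,c). L $$ (a,c) * s c))"
      "c < dim_col (mat N N (\<lambda>(a,c). L $$ (a,c) * s c))"
    then have ac': "a < N" "c < N" by auto
    have "(L * D) $$ (a,c) = (\<Sum>k\<in>{0..<N}. L $$ (a,k) * D $$ (k,c))"
      using ac' LC DC by (simp add: scalar_prod_def)
    also have "\<dots> = (\<Sum>k\<in>{0..<N}. if k = c then L $$ (a,k) * s k else 0)"
      using ac' by (intro sum.cong) (auto simp: D_def)
    also have "\<dots> = L $$ (a,c) * s c" using ac' by simp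
    finally show "(L * D) $$ (a,c) = mat N N (\<lambda>(a,c). L $$ (a,c) * s c) $$ (a,c)" using ac' by simp
  qed (use LC DC in auto)
  have prod: "(L * D * transpose_mat L) $$ (a,b) = (\<Sum>c\<in>{0..<N}. g a b c)" if "a < N" "b < N" for a b
    using that LC unfolding LD g_def by (simp add: scalar_prod_def)
  define ch where "ch a = {c. c < N \<and> nr c \<and> pr c = a}" for a
  have chN: "ch a \<subseteq> {0..<N}" for a unfolding ch_def by auto
  have ach: "a < N \<Longrightarrow> a \<notin> ch a" for a unfolding ch_def using hpar by fastforce
  have Lz: "L $$ (a,c) = 0" if "a < N" "c < N" "c \<noteq> a" "c \<notin> ch a" for a c
    using that unfolding ch_def by (auto simp: Le)
  have MLDL: "M = L * D * transpose_mat L"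
  proof (rule eq_matI)
    fix a b assume ab: "a < dim_row (L * D * transpose_mat L)" "b < dim_col (L * D * transpose_mat L)"
    then have a: "a < N" and b: "b < N" using LC by auto
    show "M $$ (a,b) = (L * D * transpose_mat L) $$ (a,b)"
    proof (cases "a = b")
      case True
      have "(\<Sum>c\<in>{0..<N}. g a b c) = (\<Sum>c\<in>insert a (ch a). g a b c)"
        using a chN Lz True by (intro sum.mono_neutral_right) (auto simp: g_def)
      also have "\<dots> = g a b a + (\<Sum>c\<in>ch a. g a b c)"
        using ach[OF a] by (simp add: ch_def)
      also have "(\<Sum>c\<in>ch a. g a b c) = (\<Sum>c\<in>ch a. x c ^ 2 * s c)"
      proof (rule sum.cong[OF refl])
        fix c assume c: "c \<in> ch a"
        then have "c \<noteq> a" "c < N" "nr c" "pr c = a" using ach[OF a] by (auto simp: ch_def)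
        then have "L $$ (a,c) = x c" using a by (simp add: Le)
        then show "g a b c = x c ^ 2 * s c" using True by (simp add: g_def power2_eq_square)
      qed
      finally show ?thesis using True prod[OF a b] diag[OF a] a by (simp add: g_def Le ch_def)
    next
      case False
      have "(\<Sum>c\<in>{0..<N}. g a b c) = (\<Sum>c\<in>{a,b}. g a b c)"
      proof (intro sum.mono_neutral_right)
        show "\<forall>c\<in>{0..<N} - {a, b}. g a b c = 0"
        proof
          fix c assume c: "c \<in> {0..<N} - {a, b}"
          show "g a b c = 0"
          proof (cases "c \<in> ch a \<and> c \<in> ch b")
            case True then show ?thesis using False unfolding ch_def by auto
          next
            case False then show ?thesis using Lz[of a c] Lz[of b c] c a b by (auto simp: g_def)
          qed
        qed
      qed (use a b in auto)
      also have "\<dots> = g a b a + g a b b" using False by simp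
      finally show ?thesis using False prod[OF a b] off[OF a b False] a b by (simp add: g_def Le)
    qed
  qed (use LC DC M in auto)
  have detL: "det L = 1"
  proof -
    have "det L = (\<Prod>i=0..<N. L $$ (i,i))"
      by (rule det_height[OF LC, of h]) (auto simp: Le hpar split: if_splits)
    then show ?thesis by (simp add: Le)
  qed
  have detD: "det D = (\<Prod>i=0..<N. s i)"
  proof -
    have "det D = (\<Prod>i=0..<N. D $$ (i,i))"
      by (rule det_height[OF DC, of "\<lambda>_. 0"]) (auto simp: D_def)
    then show ?thesis by (simp add: D_def)
  qed
  have "det M = det (L * D) * det (transpose_mat L)"
    unfolding MLDL by (rule det_mult[of _ N]) (use LC DC in auto)
  also have "\<dots> = det L * det D * det L"
    using det_mult[OF LC DC] det_transpose[OF LC] by simp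
  finally show ?thesis using detL detD by simp
qed



locale bethe = rtree +
  fixes k :: nat and n d :: "nat \<Rightarrow> nat"
  assumes k2: "k \<ge> 2" and dmax: "\<And>v. v < N \<Longrightarrow> dist v < k"
    and dex: "\<exists>v<N. dist v = k - 1"
    and ndef: "\<And>j. 1 \<le> j \<Longrightarrow> j \<le> k \<Longrightarrow> n j = card {v. v < N \<and> dist v = k - j}"
    and ddef: "\<And>v. v < N \<Longrightarrow> gdegree N E v = d (k - dist v)"
begin

definition ch where "ch v = {u. u < N \<and> u \<noteq> r \<and> pred u = v}"
definition V where "V j = {v. v < N \<and> dist v = k - j}"
definition cc where "cc j = d j - (if j = k then 0 else 1)"

lemma finite_ch[simp]: "finite (ch v)" unfolding ch_def by simp
lemma finite_V[simp]: "finite (V j)" unfolding V_def by simp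
lemma ch_dist: "u \<in> ch v \<Longrightarrow> dist u = dist v + 1" unfolding ch_def using pred by auto
lemma ch_N: "u \<in> ch v \<Longrightarrow> u < N" unfolding ch_def by auto

lemma dist_zero_iff: "v < N \<Longrightarrow> dist v = 0 \<longleftrightarrow> v = r" using dist0 dist_r by auto

lemma deg: assumes v: "v < N" shows "gdegree N E v = card (ch v) + (if v = r then 0 else 1)"
proof -
  have eq: "{u. u < N \<and> E v u} = ch v \<union> (if v = r then {} else {pred v})"
    using edge_iff[OF v] pred[OF v] unfolding ch_def by auto
  show ?thesis
  proof (cases "v = r")
    case True then show ?thesis using eq unfolding gdegree_def by simp
  next
    case False
    have "pred v \<notin> ch v"
    proof
      assume "pred v \<in> ch v"
      then have "dist (pred v) = dist v + 1" by (rule ch_dist)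
      then show False using pred(2)[OF v False] by simp
    qed
    then show ?thesis using eq False unfolding gdegree_def by simp
  qed
qed

lemma Vk: "V k = {r}" unfolding V_def using dist_zero_iff rN by auto

lemma nV: "1 \<le> j \<Longrightarrow> j \<le> k \<Longrightarrow> n j = card (V j)" using ndef unfolding V_def by simp

lemma nk: "n k = 1" using nV[of k] k2 Vk by simp

lemma V_ne: assumes "1 \<le> j" "j \<le> k" shows "V j \<noteq> {}"
proof -
  obtain v where v: "v < N" "dist v = k - 1" using dex by blast
  have "anc (j - 1) v < N \<and> dist (anc (j - 1) v) = dist v - (j - 1)"
    using anc[OF v(1)] v(2) assms by simp
  then have "anc (j - 1) v \<in> V j" unfolding V_def using v(2) assms by auto
  then show ?thesis by blast
qed

lemma n_pos: "1 \<le> j \<Longrightarrow> j \<le> k \<Longrightarrow> n j > 0"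
  using nV V_ne finite_V by (simp add: card_gt_0_iff)

lemma ch_card: assumes j: "2 \<le> j" "j \<le> k" and v: "v \<in> V j" shows "card (ch v) = cc j"
proof -
  have vN: "v < N" and dv: "dist v = k - j" using v unfolding V_def by auto
  have "gdegree N E v = d j" using ddef[OF vN] dv j by simp
  moreover have "v = r \<longleftrightarrow> j = k" using dist_zero_iff[OF vN] dv j by auto
  ultimately show ?thesis using deg[OF vN] unfolding cc_def by auto
qed

lemma n_rec: assumes j: "2 \<le> j" "j \<le> k" shows "n (j - 1) = cc j * n j"
proof -
  have fib: "{u \<in> V (j - 1). pred u = v} = ch v" if v: "v \<in> V j" for v
  proof -
    have "dist v = k - j" using v unfolding V_def by auto
    show ?thesis
    proof (intro equalityI subsetI)
      fix u assume "u \<in> {u \<in> V (j - 1). pred u = v}"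
      then have u: "u < N" "dist u = k - (j - 1)" "pred u = v" unfolding V_def by auto
      then have "u \<noteq> r" using dist_r j by auto
      then show "u \<in> ch v" using u unfolding ch_def by auto
    next
      fix u assume "u \<in> ch v"
      then have u: "u < N" "u \<noteq> r" "pred u = v" unfolding ch_def by auto
      have "dist u = dist v + 1" using pred(2)[OF u(1,2)] u(3) by simp
      then show "u \<in> {u \<in> V (j - 1). pred u = v}" using u \<open>dist v = k - j\<close> j unfolding V_def by auto
    qed
  qed
  have img: "pred ` V (j - 1) \<subseteq> V j"
  proof
    fix w assume "w \<in> pred ` V (j - 1)"
    then obtain u where u: "u \<in> V (j - 1)" "w = pred u" by blast
    then have uN: "u < N" and du: "dist u = k - (j - 1)" unfolding V_def by auto
    then have "u \<noteq> r" using dist_r j by auto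
    then show "w \<in> V j" using pred[OF uN] u du j unfolding V_def by auto
  qed
  have "n (j - 1) = card (V (j - 1))" using nV j by simp
  also have "\<dots> = (\<Sum>u\<in>V (j - 1). 1)" by simp
  also have "\<dots> = (\<Sum>v\<in>V j. \<Sum>u\<in>{u \<in> V (j - 1). pred u = v}. 1)"
    by (rule sum.group[symmetric]) (use img in auto)
  also have "\<dots> = (\<Sum>v\<in>V j. cc j)" using fib ch_card[OF j] by (intro sum.cong) auto
  also have "\<dots> = cc j * n j" using nV j by simp
  finally show ?thesis .
qed

lemma n_mono: assumes "1 \<le> j" "j < k" shows "n (j + 1) \<le> n j"
proof -
  have "n j = cc (j + 1) * n (j + 1)" using n_rec[of "j + 1"] assms by simp
  moreover have "n j > 0" using n_pos assms by simp
  ultimately show ?thesis by (cases "cc (j + 1)") auto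
qed

lemma m_real: assumes "2 \<le> j" "j \<le> k" shows "real (cc j) = real (n (j - 1)) / real (n j)"
  using n_rec[OF assms] n_pos[of j] assms by simp

end


lemma tele:
  fixes P :: "nat \<Rightarrow> real" and n :: "nat \<Rightarrow> nat"
  assumes P0: "P 0 = 1" and nz: "\<And>j. 1 \<le> j \<Longrightarrow> j < Suc K \<Longrightarrow> P j \<noteq> 0"
    and mono: "\<And>j. 1 \<le> j \<Longrightarrow> j < Suc K \<Longrightarrow> n (j + 1) \<le> n j"
  shows "(\<Prod>j=1..Suc K. (P j / P (j - 1)) ^ n j) = P (Suc K) ^ n (Suc K) * (\<Prod>j=1..K. P j ^ (n j - n (j + 1)))"
  using nz mono
proof (induction K)
  case 0 then show ?case using P0 by simp
next
  case (Suc K)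
  have IH: "(\<Prod>j=1..Suc K. (P j / P (j - 1)) ^ n j) = P (Suc K) ^ n (Suc K) * (\<Prod>j=1..K. P j ^ (n j - n (j + 1)))"
    using Suc.IH Suc.prems by auto
  have nzK: "P (Suc K) \<noteq> 0" using Suc.prems by auto
  have le: "n (Suc (Suc K)) \<le> n (Suc K)" using Suc.prems(2)[of "Suc K"] by simp
  have pd: "P (Suc K) ^ (n (Suc K) - n (Suc (Suc K))) = P (Suc K) ^ n (Suc K) / P (Suc K) ^ n (Suc (Suc K))"
    by (rule power_diff[OF nzK le])
  have "(\<Prod>j=1..Suc (Suc K). (P j / P (j - 1)) ^ n j) =
      (\<Prod>j=1..Suc K. (P j / P (j - 1)) ^ n j) * (P (Suc (Suc K)) / P (Suc K)) ^ n (Suc (Suc K))"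
    by (simp add: prod.cl_ivl_Suc)
  also have "\<dots> = P (Suc K) ^ n (Suc K) * (\<Prod>j=1..K. P j ^ (n j - n (j + 1))) *
      (P (Suc (Suc K)) ^ n (Suc (Suc K)) / P (Suc K) ^ n (Suc (Suc K)))"
    by (subst IH, subst power_divide, rule refl)
  also have "\<dots> = P (Suc (Suc K)) ^ n (Suc (Suc K)) * ((\<Prod>j=1..K. P j ^ (n j - n (j + 1))) *
      P (Suc K) ^ (n (Suc K) - n (Suc (Suc K))))"
    unfolding pd by (simp add: field_simps)
  also have "\<dots> = P (Suc (Suc K)) ^ n (Suc (Suc K)) * (\<Prod>j=1..Suc K. P j ^ (n j - n (j + 1)))"
    by (simp add: prod.cl_ivl_Suc)
  finally show ?case .
qed

lemma Pb_lead: "degree (Pb \<alpha> d m j) = j \<and> coeff (Pb \<alpha> d m j) j = 1"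
proof (induction \<alpha> d m j rule: Pb.induct)
  case (1 \<alpha> d m) then show ?case by simp
next
  case (2 \<alpha> d m) then show ?case by simp
next
  case (3 \<alpha> d m j)
  let ?a = "[:- (\<alpha> * d (Suc (Suc j))), 1:] :: real poly"
  let ?p = "Pb \<alpha> d m (Suc j)"
  let ?q = "Polynomial.smult ((1 - \<alpha>)^2 * m (Suc j)) (Pb \<alpha> d m j)"
  have p: "degree ?p = Suc j" "coeff ?p (Suc j) = 1" using 3 by auto
  have q: "degree ?q \<le> j" using 3 by (simp add: degree_smult_le)
  have a: "degree ?a = 1" "coeff ?a 1 = 1" by auto
  have ap0: "?a \<noteq> 0" "?p \<noteq> 0" using a p by auto
  have dap: "degree (?a * ?p) = Suc (Suc j)" using degree_mult_eq[OF ap0] a p by simp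
  have cap: "coeff (?a * ?p) (Suc (Suc j)) = 1"
    using coeff_mult_degree_sum[of ?a ?p] a p by simp
  have cq: "coeff ?q (Suc (Suc j)) = 0" using q by (intro coeff_eq_0) simp
  have c: "coeff (?a * ?p - ?q) (Suc (Suc j)) = 1" using cap cq by simp
  have "degree (?a * ?p - ?q) \<le> Suc (Suc j)"
    using degree_diff_le_max[of "?a * ?p" ?q] dap q by simp
  moreover have "Suc (Suc j) \<le> degree (?a * ?p - ?q)" using c by (intro le_degree) simp
  ultimately show ?case using c by simp
qed

lemma Pb_nz: "Pb \<alpha> d m j \<noteq> 0"
  using Pb_lead[of \<alpha> d m j] by auto

context bethe begin

lemma det_eval:
  fixes lam \<alpha> :: real
  defines "P \<equiv> \<lambda>j. poly (Pb \<alpha> (\<lambda>j. real (d j)) (\<lambda>j. real (n j) / real (n (j + 1))) j) lam"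
  assumes nz: "\<And>j. 1 \<le> j \<Longrightarrow> j < k \<Longrightarrow> P j \<noteq> 0"
  shows "poly (char_poly (A_alpha \<alpha> N E)) lam = P k * (\<Prod>j\<in>{1..k-1}. P j ^ (n j - n (j + 1)))"
proof -
  define \<beta> where "\<beta> = 1 - \<alpha>"
  define A where "A = A_alpha \<alpha> N E"
  have AC: "A \<in> carrier_mat N N" unfolding A_def A_alpha_def deg_matrix_def adj_matrix_def by auto
  have Ae: "A $$ (a,b) = (if a = b then \<alpha> * real (gdegree N E a) else 0) + (if E a b then \<beta> else 0)"
    if "a < N" "b < N" for a b
    using that unfolding A_def A_alpha_def deg_matrix_def adj_matrix_def \<beta>_def by auto
  define M where "M = mat N N (\<lambda>(a,b). (if a = b then lam else 0) - A $$ (a,b))"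
  have MC: "M \<in> carrier_mat N N" by (simp add: M_def)
  have cp: "poly (char_poly A) lam = det M"
    unfolding char_poly_def
    by (rule poly_det_cong[OF MC char_poly_matrix_closed[OF AC]])
       (use AC in \<open>auto simp: char_poly_matrix_def M_def\<close>)
  have P0: "P 0 = 1" and P1: "P 1 = lam - \<alpha>" unfolding P_def by simp_all
  have Prec: "P (Suc (Suc j)) = (lam - \<alpha> * d (Suc (Suc j))) * P (Suc j)
      - \<beta>^2 * (n (Suc j) / n (Suc (Suc j))) * P j" for j
    unfolding P_def \<beta>_def by (simp add: algebra_simps)
  define S where "S j = P j / P (j - 1)" for j
  have Pnz: "j < k \<Longrightarrow> P j \<noteq> 0" for j using nz P0 by (cases j) auto
  have Snz: "j < k \<Longrightarrow> S j \<noteq> 0" for j unfolding S_def using Pnz by simp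
  define s where "s v = S (k - dist v)" for v
  define x where "x v = - \<beta> / s v" for v
  have snz: "v < N \<Longrightarrow> v \<noteq> r \<Longrightarrow> s v \<noteq> 0" for v
    unfolding s_def using Snz dist_zero_iff[of v] k2 by auto
  have hpar: "\<And>v. v < N \<Longrightarrow> v \<noteq> r \<Longrightarrow> pred v < N \<and> dist (pred v) < dist v"
    using pred by fastforce
  have diag: "M $$ (a,a) = s a + (\<Sum>c\<in>{c. c < N \<and> c \<noteq> r \<and> pred c = a}. x c ^ 2 * s c)"
    if a: "a < N" for a
  proof -
    define j where "j = k - dist a"
    have j: "1 \<le> j" "j \<le> k" using dmax[OF a] unfolding j_def by auto
    have Maa: "M $$ (a,a) = lam - \<alpha> * real (gdegree N E a)" using a Ae E_irr unfolding M_def by simp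
    have chset: "{c. c < N \<and> c \<noteq> r \<and> pred c = a} = ch a" unfolding ch_def by simp
    have cterm: "x c ^ 2 * s c = \<beta>^2 / S (j - 1)" if c: "c \<in> ch a" for c
    proof -
      have dc: "dist c = dist a + 1" using ch_dist[OF c] .
      have cN: "c < N" "c \<noteq> r" using c unfolding ch_def by auto
      have "s c = S (j - 1)" unfolding s_def j_def using dc by simp
      moreover have "s c \<noteq> 0" using snz cN by simp
      ultimately show ?thesis unfolding x_def by (simp add: power2_eq_square)
    qed
    have sum: "(\<Sum>c\<in>ch a. x c ^ 2 * s c) = real (card (ch a)) * (\<beta>^2 / S (j - 1))"
      using cterm by simp
    show ?thesis
    proof (cases "j = 1")
      case True
      have e: "ch a = {}"
      proof (rule ccontr)
        assume "ch a \<noteq> {}"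
        then obtain c where c: "c \<in> ch a" by blast
        then have "dist c = dist a + 1" "c < N" using ch_dist ch_N by auto
        then show False using dmax[of c] True j_def dmax[OF a] by simp
      qed
      have "a \<noteq> r" using True j_def dist_r k2 by auto
      then have "gdegree N E a = 1" using deg[OF a] e by simp
      moreover have "s a = lam - \<alpha>" unfolding s_def j_def[symmetric] S_def using True P0 P1 by simp
      ultimately show ?thesis unfolding chset e using Maa by simp
    next
      case False
      then obtain i where i: "j = Suc (Suc i)" using j by (metis One_nat_def Suc_le_D not0_implies_Suc)
      have aV: "a \<in> V j" unfolding V_def j_def using a dmax[OF a] by auto
      have cc: "real (card (ch a)) = real (n (Suc i)) / real (n (Suc (Suc i)))"
        using ch_card[OF _ j(2) aV] m_real[of j] j i by simp
      have dg: "gdegree N E a = d (Suc (Suc i))" using ddef[OF a] i j_def by simp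
      have nz1: "P (Suc i) \<noteq> 0" "P i \<noteq> 0" using Pnz i j by auto
      have "lam - \<alpha> * real (d (Suc (Suc i))) =
          S (Suc (Suc i)) + real (n (Suc i)) / real (n (Suc (Suc i))) * (\<beta>^2 / S (Suc i))"
        unfolding S_def using nz1 by (simp add: Prec field_simps)
      moreover have "s a = S (Suc (Suc i))" unfolding s_def j_def[symmetric] using i by simp
      ultimately show ?thesis unfolding chset sum using Maa cc dg i by simp
    qed
  qed
  have off: "M $$ (a,b) = (if a \<noteq> r \<and> pred a = b then s a * x a else 0) +
      (if b \<noteq> r \<and> pred b = a then s b * x b else 0)"
    if ab: "a < N" "b < N" "a \<noteq> b" for a b
  proof -
    have Mab: "M $$ (a,b) = - (if E a b then \<beta> else 0)" using ab Ae unfolding M_def by simp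
    have sx: "v < N \<Longrightarrow> v \<noteq> r \<Longrightarrow> s v * x v = - \<beta>" for v using snz unfolding x_def by simp
    have notboth: "\<not> ((a \<noteq> r \<and> pred a = b) \<and> (b \<noteq> r \<and> pred b = a))"
      using pred(2)[OF ab(1)] pred(2)[OF ab(2)] by auto
    show ?thesis using Mab edge_iff[OF ab(1,2)] sx ab notboth by auto
  qed
  have "det M = (\<Prod>a=0..<N. s a)"
    by (rule ldl_det[where nr = "\<lambda>v. v \<noteq> r" and pr = pred and h = dist and x = x, OF MC hpar diag off])
  also have "\<dots> = (\<Prod>j\<in>{1..k}. \<Prod>a\<in>{a \<in> {0..<N}. k - dist a = j}. s a)"
    by (rule prod.group[symmetric]) (auto simp: Suc_le_eq dmax)
  also have "\<dots> = (\<Prod>j\<in>{1..k}. S j ^ n j)"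
  proof (rule prod.cong[OF refl])
    fix j assume j: "j \<in> {1..k}"
    have fib: "{a \<in> {0..<N}. k - dist a = j} = V j" unfolding V_def using j dmax by auto
    have "(\<Prod>a\<in>V j. s a) = (\<Prod>a\<in>V j. S j)" unfolding s_def V_def using j
      by (intro prod.cong) auto
    then show "(\<Prod>a\<in>{a \<in> {0..<N}. k - dist a = j}. s a) = S j ^ n j"
      using fib nV[of j] j by simp
  qed
  also have "\<dots> = (\<Prod>j=1..Suc (k - 1). (P j / P (j - 1)) ^ n j)"
    using k2 unfolding S_def by (simp add: Suc_diff_1 del: Suc_diff_1)
  also have "\<dots> = P (Suc (k - 1)) ^ n (Suc (k - 1)) * (\<Prod>j=1..k-1. P j ^ (n j - n (j + 1)))"
    by (rule tele[where P = P and n = n and K = "k - 1", OF P0]) (use Pnz n_mono k2 in auto)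
  also have "\<dots> = P k * (\<Prod>j\<in>{1..k-1}. P j ^ (n j - n (j + 1)))"
    using k2 nk by simp
  finally show ?thesis using cp unfolding A_def by simp
qed

end


theorem theorem4:
  fixes N k r :: nat and E :: "nat \<Rightarrow> nat \<Rightarrow> bool" and \<alpha> :: real
    and n d :: "nat \<Rightarrow> nat"
  assumes bethe: "gen_bethe_tree N E r k"
    and k2: "k \<ge> 2"
    and alpha: "0 \<le> \<alpha>" "\<alpha> \<le> 1"
    and n_def: "\<And>j. j \<in> {1..k} \<Longrightarrow> n j = card {v. v < N \<and> level N E r v = k - j + 1}"
    and d_def: "\<And>j v. j \<in> {1..k} \<Longrightarrow> v < N \<Longrightarrow> level N E r v = k - j + 1 \<Longrightarrow>
                  gdegree N E v = d j"
  shows "char_poly (A_alpha \<alpha> N E) =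
     Pb \<alpha> (\<lambda>j. real (d j)) (\<lambda>j. real (n j) / real (n (j + 1))) k *
     (\<Prod>j\<in>{1..k-1}. Pb \<alpha> (\<lambda>j. real (d j)) (\<lambda>j. real (n j) / real (n (j + 1))) j
                        ^ (n j - n (j + 1)))"
proof -
  have bt: "is_tree N E" "r < N" "\<forall>v<N. level N E r v \<le> k" "\<exists>v<N. level N E r v = k"
    using bethe unfolding gen_bethe_tree_def by auto
  interpret rt: rtree N E r using bt(1,2) by unfold_locales
  have lev: "level N E r v = rt.dist v + 1" for v unfolding level_def rt.dist_def by simp
  interpret b: bethe N E r k n d
  proof unfold_locales
    show "2 \<le> k" by (rule k2)
    show "rt.dist v < k" if "v < N" for v using bt(3) that lev[of v] by fastforce
    show "\<exists>v<N. rt.dist v = k - 1" using bt(4) lev by fastforce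
    show "n j = card {v. v < N \<and> rt.dist v = k - j}" if "1 \<le> j" "j \<le> k" for j
    proof -
      have "{v. v < N \<and> level N E r v = k - j + 1} = {v. v < N \<and> rt.dist v = k - j}"
        using lev that by auto
      then show ?thesis using n_def[of j] that by simp
    qed
    show "gdegree N E v = d (k - rt.dist v)" if v: "v < N" for v
    proof -
      have "level N E r v \<le> k" using bt(3) v by simp
      then have "rt.dist v < k" using lev[of v] by simp
      then show ?thesis using d_def[of "k - rt.dist v" v] v lev[of v] by simp
    qed
  qed
  let ?Pb = "Pb \<alpha> (\<lambda>j. real (d j)) (\<lambda>j. real (n j) / real (n (j + 1)))"
  let ?L = "char_poly (A_alpha \<alpha> N E)"
  let ?R = "?Pb k * (\<Prod>j\<in>{1..k-1}. ?Pb j ^ (n j - n (j + 1)))"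
  define Q where "Q = (\<Prod>j\<in>{1..k-1}. ?Pb j)"
  have Qnz: "Q \<noteq> 0" unfolding Q_def using Pb_nz by simp
  have agree: "poly ?L lam = poly ?R lam" if q: "poly Q lam \<noteq> 0" for lam
  proof -
    have nz: "poly (?Pb j) lam \<noteq> 0" if "1 \<le> j" "j < k" for j
      using q that unfolding Q_def poly_prod by auto
    show ?thesis using b.det_eval[of \<alpha> lam] nz by (simp add: poly_prod)
  qed
  show ?thesis
  proof (rule ccontr)
    assume ne: "?L \<noteq> ?R"
    then have "?L - ?R \<noteq> 0" by simp
    then have fin: "finite {x. poly (?L - ?R) x = 0}" by (rule poly_roots_finite)
    have fin2: "finite {x. poly Q x = 0}" using Qnz by (rule poly_roots_finite)
    have "UNIV \<subseteq> {x. poly (?L - ?R) x = 0} \<union> {x. poly Q x = 0}" using agree by auto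
    then have "finite (UNIV :: real set)" using fin fin2 finite_subset by blast
    then show False using infinite_UNIV_char_0 by blast
  qed
qed


end
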